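(* Let $k\ge3$ and let $\mathcal S=\sum_{\alpha\ge k}\Psi^{(\alpha)}\,\partial/\partial\psi^{(\alpha)}$ be a symmetry of $\mathcal E_*$ (an invisible symmetry of depth $k$), i.e. $[\mathcal S,D^{( * )}_x]=[\mathcal S,D^{( * )}_y]=0$, with $\Psi^{(\alpha)}$ smooth functions on $\mathcal E_*$. Then $\Psi^{(k)}$ and $\Psi^{(k+1)}$ are constants. In particular, if $\Psi^{(k)}\neq0$, then after multiplication by a nonzero constant $$\mathcal S=\frac{\partial}{\partial\psi^{(k)}}+\gamma\frac{\partial}{\partial\psi^{(k+1)}}+\sum_{\alpha\ge k+2}\Psi^{(\alpha)}\frac{\partial}{\partial\psi^{(\alpha)}},\qquad\gamma\in\mathbb R.$$
   Context: Let $\mathcal E_1$ be the system $u_y+vu_x=\frac1{v-u}$, $v_y+uv_x=\frac1{u-v}$ with internal coordinates $x,y,u_i=\partial^iu/\partial x^i$, $v_i=\partial^iv/\partial x^i$ ($i\ge0$) and total derivatives $D_x=\partial_x+\sum_i(u_{i+1}\partial_{u_i}+v_{i+1}\partial_{v_i})$, $D_y=\partial_y+\sum_i\big(D_x^i(\tfrac1{v-u}-vu_1)\partial_{u_i}+D_x^i(\tfrac1{u-v}-uv_1)\partial_{v_i}\big)$. Let $\sigma_m=\sum_{i+j=m}u^iv^j$, $\psi^{(1)}=y$, $\psi^{(2)}=x$, and for $k\ge2$ put $X^{(k)}=\sigma_{k-2}-\sum_{i=1}^{k-3}i\,\sigma_{k-i-3}\psi^{(i)}$, for $k\ge3$ put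 $Y^{(k)}=-uv\,X^{(k-1)}-(k-2)\psi^{(k-2)}$. The space $\mathcal E_*$ has coordinates $x,y,u_i,v_i$ and $\psi^{(k)}$, $k\ge3$, with commuting total derivatives $D^{( * )}_x=D_x+\sum_{k\ge3}X^{(k)}\partial/\partial\psi^{(k)}$, $D^{( * )}_y=D_y+\sum_{k\ge3}Y^{(k)}\partial/\partial\psi^{(k)}$. Functions on $\mathcal E_*$ depend on finitely many coordinates. *)

theory Defs
  imports "HOL-Analysis.Analysis"
begin

text \<open>Coordinates of the covering space E_*: x, y, u_i, v_i (i >= 0) and psi^(n) (n >= 3).
  The constructor Cpsi n is only a genuine coordinate for n >= 3.\<close>
datatype coord = Cx | Cy | Cu nat | Cv nat | Cpsi nat

definition valid_coord :: "coord \<Rightarrow> bool" where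
  "valid_coord c = (case c of Cpsi n \<Rightarrow> 3 \<le> n | _ \<Rightarrow> True)"

type_synonym pt = "coord \<Rightarrow> real"

text \<open>Domain of the system: u \<noteq> v (so that 1/(v-u) is defined).\<close>
definition Dom :: "pt set" where
  "Dom = {p. p (Cu 0) \<noteq> p (Cv 0)}"

definition pd :: "coord \<Rightarrow> (pt \<Rightarrow> real) \<Rightarrow> pt \<Rightarrow> real" where
  "pd c f p = deriv (\<lambda>t. f (p(c := t))) (p c)"

definition iter_pd :: "coord list \<Rightarrow> (pt \<Rightarrow> real) \<Rightarrow> pt \<Rightarrow> real" where
  "iter_pd cs f = foldr pd cs f"

definition depends_fin :: "(pt \<Rightarrow> real) \<Rightarrow> bool" where
  "depends_fin f \<longleftrightarrow> (\<exists>C. finite C \<and> (\<forall>c\<in>C. valid_coord c) \<and>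
      (\<forall>p\<in>Dom. \<forall>q\<in>Dom. (\<forall>c\<in>C. p c = q c) \<longrightarrow> f p = f q))"

definition smooth_fun :: "(pt \<Rightarrow> real) \<Rightarrow> bool" where
  "smooth_fun f \<longleftrightarrow> depends_fin f \<and>
     (\<forall>cs. continuous_on Dom (iter_pd cs f) \<and>
        (\<forall>c. \<forall>p\<in>Dom. (\<lambda>t. iter_pd cs f (p(c := t))) differentiable (at (p c))))"

text \<open>Vector field sum_c coef_c * d/dc applied to a function (finite sum for
  functions depending on finitely many coordinates).\<close>
definition vfield :: "(coord \<Rightarrow> pt \<Rightarrow> real) \<Rightarrow> (pt \<Rightarrow> real) \<Rightarrow> pt \<Rightarrow> real" where
  "vfield coef f p = infsum (\<lambda>c. coef c p * pd c f p) UNIV"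

definition sigma :: "nat \<Rightarrow> pt \<Rightarrow> real" where
  "sigma m p = (\<Sum>i\<le>m. p (Cu 0) ^ i * p (Cv 0) ^ (m - i))"

definition psi :: "nat \<Rightarrow> pt \<Rightarrow> real" where
  "psi n p = (if n = 1 then p Cy else if n = 2 then p Cx else p (Cpsi n))"

definition Xk :: "nat \<Rightarrow> pt \<Rightarrow> real" where
  "Xk k p = sigma (k - 2) p - (\<Sum>i = 1..k - 3. real i * sigma (k - i - 3) p * psi i p)"

definition Yk :: "nat \<Rightarrow> pt \<Rightarrow> real" where
  "Yk k p = - p (Cu 0) * p (Cv 0) * Xk (k - 1) p - real (k - 2) * psi (k - 2) p"

definition coefX1 :: "coord \<Rightarrow> pt \<Rightarrow> real" where
  "coefX1 c p = (case c of Cx \<Rightarrow> 1 | Cy \<Rightarrow> 0 | Cu i \<Rightarrow> p (Cu (Suc i))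
                  | Cv i \<Rightarrow> p (Cv (Suc i)) | Cpsi n \<Rightarrow> 0)"

definition Dx1 :: "(pt \<Rightarrow> real) \<Rightarrow> pt \<Rightarrow> real" where
  "Dx1 = vfield coefX1"

definition Fu :: "pt \<Rightarrow> real" where
  "Fu p = 1 / (p (Cv 0) - p (Cu 0)) - p (Cv 0) * p (Cu 1)"

definition Fv :: "pt \<Rightarrow> real" where
  "Fv p = 1 / (p (Cu 0) - p (Cv 0)) - p (Cu 0) * p (Cv 1)"

definition coefXs :: "coord \<Rightarrow> pt \<Rightarrow> real" where
  "coefXs c p = (case c of Cx \<Rightarrow> 1 | Cy \<Rightarrow> 0 | Cu i \<Rightarrow> p (Cu (Suc i))
                  | Cv i \<Rightarrow> p (Cv (Suc i)) | Cpsi n \<Rightarrow> (if 3 \<le> n then Xk n p else 0))"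

definition coefYs :: "coord \<Rightarrow> pt \<Rightarrow> real" where
  "coefYs c p = (case c of Cx \<Rightarrow> 0 | Cy \<Rightarrow> 1 | Cu i \<Rightarrow> (Dx1 ^^ i) Fu p
                  | Cv i \<Rightarrow> (Dx1 ^^ i) Fv p | Cpsi n \<Rightarrow> (if 3 \<le> n then Yk n p else 0))"

definition Dxs :: "(pt \<Rightarrow> real) \<Rightarrow> pt \<Rightarrow> real" where
  "Dxs = vfield coefXs"

definition Dys :: "(pt \<Rightarrow> real) \<Rightarrow> pt \<Rightarrow> real" where
  "Dys = vfield coefYs"

definition invis_field :: "nat \<Rightarrow> (nat \<Rightarrow> pt \<Rightarrow> real) \<Rightarrow> (pt \<Rightarrow> real) \<Rightarrow> pt \<Rightarrow> real" where
  "invis_field k Psi = vfield (\<lambda>c p. case c of Cpsi a \<Rightarrow> (if k \<le> a then Psi a p else 0) | _ \<Rightarrow> 0)"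

definition is_symmetry :: "((pt \<Rightarrow> real) \<Rightarrow> pt \<Rightarrow> real) \<Rightarrow> bool" where
  "is_symmetry S \<longleftrightarrow> (\<forall>f. smooth_fun f \<longrightarrow>
      (\<forall>p\<in>Dom. S (Dxs f) p = Dxs (S f) p \<and> S (Dys f) p = Dys (S f) p))"

end

theory Submission
  imports Defs "HOL-Computational_Algebra.Polynomial"
begin


definition dep :: "(pt \<Rightarrow> real) \<Rightarrow> coord set \<Rightarrow> bool" where
  "dep F C \<longleftrightarrow> (\<forall>p\<in>Dom. \<forall>q\<in>Dom. (\<forall>c\<in>C. p c = q c) \<longrightarrow> F p = F q)"

lemma dep_mono: "dep F C \<Longrightarrow> C \<subseteq> D \<Longrightarrow> dep F D"
  unfolding dep_def by blast

lemma cont_if_id: "continuous_on UNIV (\<lambda>x::real. if P then x else a)"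
  by (cases P) auto

lemma open_line: "open {s. p(c:=s) \<in> Dom}"
proof -
  have "{s. p(c:=s) \<in> Dom} = {s. (if c = Cu 0 then s else p (Cu 0)) \<noteq> (if c = Cv 0 then s else p (Cv 0))}"
    by (auto simp: Dom_def)
  also have "open \<dots>"
    by (intro open_Collect_neq) (auto intro: cont_if_id)
  finally show ?thesis .
qed

lemma pd_cong:
  assumes "open S" "p c \<in> S" "q c = p c" "\<And>s. s \<in> S \<Longrightarrow> F (p(c:=s)) = G (q(c:=s))"
  shows "pd c F p = pd c G q"
  unfolding pd_def
proof (rule deriv_cong_ev)
  show "\<forall>\<^sub>F x in nhds (p c). F (p(c := x)) = G (q(c := x))"
    by (rule eventually_nhds[THEN iffD2], rule exI[of _ S]) (use assms in auto)
qed (use assms in auto)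

lemma depD: "dep F C \<Longrightarrow> p \<in> Dom \<Longrightarrow> q \<in> Dom \<Longrightarrow> (\<And>c. c \<in> C \<Longrightarrow> p c = q c) \<Longrightarrow> F p = F q"
  unfolding dep_def by blast

lemma pd_zero:
  assumes "dep F C" "c \<notin> C" "p \<in> Dom"
  shows "pd c F p = 0"
proof -
  have "pd c F p = pd c (\<lambda>_. F p) p"
  proof (rule pd_cong[OF open_line[of p c]])
    fix s assume "s \<in> {s. p(c := s) \<in> Dom}"
    then show "F (p(c := s)) = F p" using assms by (intro depD[of F C]) auto
  qed (use assms in auto)
  then show ?thesis by (simp add: pd_def)
qed

lemma pd_inv:
  assumes "dep F C" "c' \<notin> C" "c \<noteq> c'" "p \<in> Dom" "p(c':=t) \<in> Dom"
  shows "pd c F (p(c':=t)) = pd c F p"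
proof (rule pd_cong[OF open_Int[OF open_line[of "p(c':=t)" c] open_line[of p c]]])
  fix s assume "s \<in> {s. p(c' := t, c := s) \<in> Dom} \<inter> {s. p(c := s) \<in> Dom}"
  then show "F (p(c' := t, c := s)) = F (p(c := s))"
    using assms by (intro depD[of F C]) auto
qed (use assms fun_upd_idem[of "p(c':=t)" c "p c"] in auto)

lemma vfield_fin:
  assumes "finite C" "dep F C" "p \<in> Dom"
  shows "vfield coef F p = (\<Sum>c\<in>C. coef c p * pd c F p)"
proof -
  have "vfield coef F p = infsum (\<lambda>c. coef c p * pd c F p) C"
    unfolding vfield_def by (rule infsum_cong_neutral) (use assms pd_zero in auto)
  then show ?thesis using assms by simp
qed

lemma line_const:
  assumes diff: "\<And>q. q \<in> Dom \<Longrightarrow> (\<lambda>t. F (q(c:=t))) differentiable (at (q c))"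
    and ab: "a \<le> b" and inD: "\<And>s. s \<in> {a..b} \<Longrightarrow> p(c:=s) \<in> Dom"
    and z: "\<And>q. q \<in> Dom \<Longrightarrow> pd c F q = 0"
  shows "F (p(c:=a)) = F (p(c:=b))"
proof (cases "a = b")
  case False
  define g where "g s = F (p(c:=s))" for s
  have D: "DERIV g s :> 0" if "s \<in> {a..b}" for s
  proof -
    have q: "p(c:=s) \<in> Dom" using inD that by auto
    have e: "(\<lambda>t. F ((p(c:=s))(c:=t))) = g" by (auto simp: g_def)
    have "g differentiable (at s)" using diff[OF q] e by simp
    then have "DERIV g s :> deriv g s" by (simp add: DERIV_deriv_iff_real_differentiable)
    moreover have "deriv g s = 0" using z[OF q] e by (simp add: pd_def)
    ultimately show ?thesis by simp
  qed
  have cont: "continuous_on {a..b} g"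
  proof (rule continuous_at_imp_continuous_on, rule ballI)
    fix x assume "x \<in> {a..b}"
    then show "isCont g x" using D DERIV_isCont by blast
  qed
  have "g b = g a"
    by (rule DERIV_isconst2[of a b g b]) (use ab False D cont in auto)
  then show ?thesis by (simp add: g_def)
qed simp



lemma smooth_diff: "smooth_fun F \<Longrightarrow> q \<in> Dom \<Longrightarrow> (\<lambda>t. F (q(c:=t))) differentiable (at (q c))"
  unfolding smooth_fun_def using iter_pd_def
  by (metis foldr.simps(1) id_apply)

lemma line_const2:
  assumes "smooth_fun F" "\<And>s. s \<in> {min a b..max a b} \<Longrightarrow> p(c:=s) \<in> Dom"
    and "\<And>q. q \<in> Dom \<Longrightarrow> pd c F q = 0"
  shows "F (p(c:=a)) = F (p(c:=b))"
proof (cases "a \<le> b")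
  case True
  show ?thesis by (rule line_const[OF smooth_diff[OF assms(1)] True]) (use assms True in auto)
next
  case False
  have "F (p(c:=b)) = F (p(c:=a))"
    by (rule line_const[OF smooth_diff[OF assms(1)]]) (use assms False in auto)
  then show ?thesis by simp
qed

lemma reduce:
  assumes sm: "smooth_fun F" and d: "dep F C" and c: "c \<noteq> Cu 0" "c \<noteq> Cv 0"
    and z: "\<And>q. q \<in> Dom \<Longrightarrow> pd c F q = 0"
  shows "dep F (C - {c})"
  unfolding dep_def
proof (intro ballI impI)
  fix p q assume pq: "p \<in> Dom" "q \<in> Dom" "\<forall>c'\<in>C - {c}. p c' = q c'"
  have inD: "p(c:=s) \<in> Dom" for s using pq c by (simp add: Dom_def)
  have "F (p(c:=p c)) = F (p(c:=q c))"
    by (rule line_const2[OF sm _ z]) (use inD in auto)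
  moreover have "F (p(c:=q c)) = F q"
    by (rule depD[OF d inD pq(2)]) (use pq(3) in auto)
  ultimately show "F p = F q" by simp
qed

lemma half_inv1:
  assumes sm: "smooth_fun F"
    and Z: "\<And>q. q \<in> Dom \<Longrightarrow> pd (Cu 0) F q = 0 \<and> pd (Cv 0) F q = 0"
    and lt: "p (Cu 0) < p (Cv 0)" "a < b"
  shows "F (p(Cu 0:=a, Cv 0:=b)) = F p"
proof -
  define V where "V = max (p (Cv 0)) b + 1"
  have "F (p(Cv 0 := p (Cv 0))) = F (p(Cv 0 := V))"
    by (rule line_const2[OF sm _ conjunct2[OF Z]]) (use lt in \<open>auto simp: Dom_def V_def\<close>)
  moreover
  have "F (p(Cv 0 := V, Cu 0 := p (Cu 0))) = F (p(Cv 0 := V, Cu 0 := a))"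
    by (rule line_const2[OF sm _ conjunct1[OF Z]]) (use lt in \<open>auto simp: Dom_def V_def\<close>)
  moreover
  have "F (p(Cv 0 := V, Cu 0 := a, Cv 0 := V)) = F (p(Cv 0 := V, Cu 0 := a, Cv 0 := b))"
    by (rule line_const2[OF sm _ conjunct2[OF Z]]) (use lt in \<open>auto simp: Dom_def V_def\<close>)
  moreover have "p(Cv 0 := V, Cu 0 := a, Cv 0 := b) = p(Cu 0:=a, Cv 0:=b)" by (auto simp: fun_eq_iff)
  moreover have "p(Cv 0 := V, Cu 0 := a, Cv 0 := V) = p(Cv 0 := V, Cu 0 := a)" by (auto simp: fun_eq_iff)
  moreover have "p(Cv 0 := V, Cu 0 := p (Cu 0)) = p(Cv 0 := V)" by (auto simp: fun_eq_iff)
  ultimately show ?thesis by simp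
qed

lemma half_inv2:
  assumes sm: "smooth_fun F"
    and Z: "\<And>q. q \<in> Dom \<Longrightarrow> pd (Cu 0) F q = 0 \<and> pd (Cv 0) F q = 0"
    and lt: "p (Cv 0) < p (Cu 0)" "b < a"
  shows "F (p(Cu 0:=a, Cv 0:=b)) = F p"
proof -
  define V where "V = max (p (Cu 0)) a + 1"
  have "F (p(Cu 0 := p (Cu 0))) = F (p(Cu 0 := V))"
    by (rule line_const2[OF sm _ conjunct1[OF Z]]) (use lt in \<open>auto simp: Dom_def V_def\<close>)
  moreover
  have "F (p(Cu 0 := V, Cv 0 := p (Cv 0))) = F (p(Cu 0 := V, Cv 0 := b))"
    by (rule line_const2[OF sm _ conjunct2[OF Z]]) (use lt in \<open>auto simp: Dom_def V_def\<close>)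
  moreover
  have "F (p(Cu 0 := V, Cv 0 := b, Cu 0 := V)) = F (p(Cu 0 := V, Cv 0 := b, Cu 0 := a))"
    by (rule line_const2[OF sm _ conjunct1[OF Z]]) (use lt in \<open>auto simp: Dom_def V_def\<close>)
  moreover have "p(Cu 0 := V, Cv 0 := b, Cu 0 := a) = p(Cu 0:=a, Cv 0:=b)" by (auto simp: fun_eq_iff)
  moreover have "p(Cu 0 := V, Cv 0 := b, Cu 0 := V) = p(Cu 0 := V, Cv 0 := b)" by (auto simp: fun_eq_iff)
  moreover have "p(Cu 0 := V, Cv 0 := p (Cv 0)) = p(Cu 0 := V)" by (auto simp: fun_eq_iff)
  ultimately show ?thesis by simp
qed

lemma psi_upd_u: "psi i (p(Cu j := t)) = psi i p"
  by (simp add: psi_def)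
lemma psi_upd_v: "psi i (p(Cv j := t)) = psi i p"
  by (simp add: psi_def)
lemma Xk_upd_u: "Xk m (p(Cu (Suc j) := t)) = Xk m p"
  by (simp add: Xk_def sigma_def psi_upd_u)
lemma Xk_upd_v: "Xk m (p(Cv (Suc j) := t)) = Xk m p"
  by (simp add: Xk_def sigma_def psi_upd_v)

lemma jet_u:
  assumes fin: "finite C" and d: "dep F C" and nC: "Cu (Suc n) \<notin> C"
    and DX: "\<And>q. q \<in> Dom \<Longrightarrow> Dxs F q = 0" and pD: "p \<in> Dom"
  shows "pd (Cu n) F p = 0"
proof (cases "Cu n \<in> C")
  case False thus ?thesis using pd_zero d pD by blast
next
  case True
  define q where "q t = p(Cu (Suc n) := t)" for t
  have qD: "q t \<in> Dom" for t using pD by (simp add: q_def Dom_def)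
  have pdq: "pd c F (q t) = pd c F p" if "c \<in> C" for c t
  proof -
    have "c \<noteq> Cu (Suc n)" using that nC by auto
    then show ?thesis using pd_inv[OF d nC _ pD qD[unfolded q_def]] unfolding q_def by blast
  qed
  have coef: "coefXs c (q t) = coefXs c (q 0) + (if c = Cu n then t else 0)" for c t
    by (cases c) (auto simp: coefXs_def q_def Xk_upd_u)
  have E: "Dxs F (q t) = (\<Sum>c\<in>C. coefXs c (q 0) * pd c F p) + t * pd (Cu n) F p" for t
  proof -
    have "Dxs F (q t) = (\<Sum>c\<in>C. coefXs c (q t) * pd c F (q t))"
      unfolding Dxs_def by (rule vfield_fin[OF fin d qD])
    also have "\<dots> = (\<Sum>c\<in>C. coefXs c (q 0) * pd c F p + t * (if c = Cu n then pd c F p else 0))"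
    proof (rule sum.cong)
      fix c assume c: "c \<in> C"
      have e1: "coefXs c (q t) = coefXs c (q 0) + (if c = Cu n then t else 0)" by (rule coef)
      show "coefXs c (q t) * pd c F (q t) = coefXs c (q 0) * pd c F p + t * (if c = Cu n then pd c F p else 0)"
        unfolding e1 pdq[OF c] by (simp add: algebra_simps)
    qed simp
    also have "\<dots> = (\<Sum>c\<in>C. coefXs c (q 0) * pd c F p) + t * pd (Cu n) F p"
      by (simp add: sum.distrib sum_distrib_left[symmetric] True fin)
    finally show ?thesis .
  qed
  have "Dxs F (q 1) - Dxs F (q 0) = pd (Cu n) F p" using E[of 0] E[of 1] by simp
  then show ?thesis using DX[OF qD[of 0]] DX[OF qD[of 1]] by simp
qed

lemma jet_v:
  assumes fin: "finite C" and d: "dep F C" and nC: "Cv (Suc n) \<notin> C"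
    and DX: "\<And>q. q \<in> Dom \<Longrightarrow> Dxs F q = 0" and pD: "p \<in> Dom"
  shows "pd (Cv n) F p = 0"
proof (cases "Cv n \<in> C")
  case False thus ?thesis using pd_zero d pD by blast
next
  case True
  define q where "q t = p(Cv (Suc n) := t)" for t
  have qD: "q t \<in> Dom" for t using pD by (simp add: q_def Dom_def)
  have pdq: "pd c F (q t) = pd c F p" if "c \<in> C" for c t
  proof -
    have "c \<noteq> Cv (Suc n)" using that nC by auto
    then show ?thesis using pd_inv[OF d nC _ pD qD[unfolded q_def]] unfolding q_def by blast
  qed
  have coef: "coefXs c (q t) = coefXs c (q 0) + (if c = Cv n then t else 0)" for c t
    by (cases c) (auto simp: coefXs_def q_def Xk_upd_v)
  have E: "Dxs F (q t) = (\<Sum>c\<in>C. coefXs c (q 0) * pd c F p) + t * pd (Cv n) F p" for t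
  proof -
    have "Dxs F (q t) = (\<Sum>c\<in>C. coefXs c (q t) * pd c F (q t))"
      unfolding Dxs_def by (rule vfield_fin[OF fin d qD])
    also have "\<dots> = (\<Sum>c\<in>C. coefXs c (q 0) * pd c F p + t * (if c = Cv n then pd c F p else 0))"
    proof (rule sum.cong)
      fix c assume c: "c \<in> C"
      have e1: "coefXs c (q t) = coefXs c (q 0) + (if c = Cv n then t else 0)" by (rule coef)
      show "coefXs c (q t) * pd c F (q t) = coefXs c (q 0) * pd c F p + t * (if c = Cv n then pd c F p else 0)"
        unfolding e1 pdq[OF c] by (simp add: algebra_simps)
    qed simp
    also have "\<dots> = (\<Sum>c\<in>C. coefXs c (q 0) * pd c F p) + t * pd (Cv n) F p"
      by (simp add: sum.distrib sum_distrib_left[symmetric] True fin)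
    finally show ?thesis .
  qed
  have "Dxs F (q 1) - Dxs F (q 0) = pd (Cv n) F p" using E[of 0] E[of 1] by simp
  then show ?thesis using DX[OF qD[of 0]] DX[OF qD[of 1]] by simp
qed



lemma sigma_pb: "sigma j (p(Cu 0 := 0, Cv 0 := b)) = b ^ j"
proof -
  have "sigma j (p(Cu 0 := 0, Cv 0 := b)) = (\<Sum>i\<le>j. (if i = 0 then b ^ j else 0))"
    unfolding sigma_def by (rule sum.cong) auto
  then show ?thesis by simp
qed

lemma psi_pb: "psi i (p(Cu 0 := x, Cv 0 := y)) = psi i p"
  by (simp add: psi_def)

definition Xp :: "pt \<Rightarrow> nat \<Rightarrow> real poly" where
  "Xp p m = monom 1 (m - 2) - (\<Sum>i = 1..m - 3. smult (real i * psi i p) (monom 1 (m - i - 3)))"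

lemma poly_Xp: "poly (Xp p m) b = Xk m (p(Cu 0 := 0, Cv 0 := b))"
  by (simp add: Xk_def Xp_def sigma_pb psi_pb poly_sum poly_monom mult_ac)

lemma coeff_Xp:
  assumes "3 \<le> m" "m \<le> M"
  shows "coeff (Xp p m) (M - 2) = (if m = M then 1 else 0)"
proof -
  have "(\<Sum>i = 1..m - 3. coeff (smult (real i * psi i p) (monom 1 (m - i - 3))) (M - 2)) = 0"
    by (rule sum.neutral) (use assms in \<open>auto simp: coeff_monom\<close>)
  moreover have "(m - 2 = M - 2) = (m = M)" using assms by arith
  moreover have "coeff (Xp p m) (M - 2) = coeff (monom (1::real) (m - 2)) (M - 2) -
     (\<Sum>i = 1..m - 3. coeff (smult (real i * psi i p) (monom 1 (m - i - 3))) (M - 2))"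
    unfolding Xp_def coeff_diff coeff_sum ..
  ultimately show ?thesis by (simp only: coeff_monom)
qed

definition cp :: "pt \<Rightarrow> coord \<Rightarrow> real poly" where
  "cp p c = (case c of Cx \<Rightarrow> 1 | Cy \<Rightarrow> 0 | Cu i \<Rightarrow> [:p (Cu (Suc i)):]
     | Cv i \<Rightarrow> [:p (Cv (Suc i)):] | Cpsi m \<Rightarrow> (if 3 \<le> m then Xp p m else 0))"

lemma poly_cp: "poly (cp p c) b = coefXs c (p(Cu 0 := 0, Cv 0 := b))"
  by (cases c) (auto simp: cp_def coefXs_def poly_Xp)

lemma coeff_cp:
  assumes "valid_coord c" "\<And>m. c = Cpsi m \<Longrightarrow> m \<le> M" "3 \<le> M"
  shows "coeff (cp p c) (M - 2) = (if c = Cpsi M then 1 else 0)"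
  using assms by (cases c) (auto simp: cp_def valid_coord_def coeff_Xp coeff_pCons split: nat.split)

lemma psi_step:
  assumes sm: "smooth_fun F" and fin: "finite C" and val: "\<forall>c\<in>C. valid_coord c"
    and d: "dep F C"
    and Z: "\<And>q. q \<in> Dom \<Longrightarrow> pd (Cu 0) F q = 0 \<and> pd (Cv 0) F q = 0"
    and DX: "\<And>q. q \<in> Dom \<Longrightarrow> Dxs F q = 0"
    and MC: "Cpsi M \<in> C" and mx: "\<And>m. Cpsi m \<in> C \<Longrightarrow> m \<le> M" and pD: "p \<in> Dom"
  shows "pd (Cpsi M) F p = 0"
proof -
  have M3: "3 \<le> M" using val MC by (auto simp: valid_coord_def)
  define g where "g c = (if c = Cu 0 \<or> c = Cv 0 then 0 else pd c F p)" for c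
  define P where "P = (\<Sum>c\<in>C. smult (g c) (cp p c))"
  define pb where "pb b = p(Cu 0 := 0, Cv 0 := b)" for b
  define R where "R = (if p (Cu 0) < p (Cv 0) then {0<..} else {..<(0::real)})"
  have RD: "pb b \<in> Dom" if "b \<in> R" for b
    using that by (auto simp: R_def pb_def Dom_def split: if_splits)
  have Rpd: "pd c F (pb b) = pd c F p" if "b \<in> R" "c \<noteq> Cu 0" "c \<noteq> Cv 0" for b c
  proof (rule pd_cong[of UNIV])
    fix s
    have e: "(pb b)(c:=s) = (p(c:=s))(Cu 0 := 0, Cv 0 := b)" using that by (auto simp: pb_def fun_eq_iff)
    show "F ((pb b)(c:=s)) = F (p(c:=s))"
    proof (cases "p (Cu 0) < p (Cv 0)")
      case True
      then show ?thesis unfolding e using that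
        by (intro half_inv1[OF sm Z]) (auto simp: R_def)
    next
      case False
      then have "p (Cv 0) < p (Cu 0)" using pD by (auto simp: Dom_def)
      then show ?thesis unfolding e using that False
        by (intro half_inv2[OF sm Z]) (auto simp: R_def)
    qed
  qed (use that in \<open>auto simp: pb_def\<close>)
  have P0: "poly P b = 0" if "b \<in> R" for b
  proof -
    have "poly P b = (\<Sum>c\<in>C. g c * coefXs c (pb b))"
      by (simp add: P_def poly_sum poly_cp pb_def)
    also have "\<dots> = (\<Sum>c\<in>C. coefXs c (pb b) * pd c F (pb b))"
      by (rule sum.cong) (use Z[OF RD[OF that]] Rpd[OF that] in \<open>auto simp: g_def\<close>)
    also have "\<dots> = Dxs F (pb b)"
      unfolding Dxs_def by (rule vfield_fin[OF fin d RD[OF that], symmetric])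
    finally show ?thesis using DX[OF RD[OF that]] by simp
  qed
  have "infinite R" by (simp add: R_def infinite_Ioi infinite_Iio)
  then have "P = 0"
    using P0 poly_roots_finite[of P] finite_subset[of R "{x. poly P x = 0}"] by blast
  moreover have "coeff P (M - 2) = g (Cpsi M)"
  proof -
    have "coeff P (M - 2) = (\<Sum>c\<in>C. g c * coeff (cp p c) (M - 2))"
      by (simp add: P_def coeff_sum)
    also have "\<dots> = (\<Sum>c\<in>C. if c = Cpsi M then g c else 0)"
    proof (rule sum.cong)
      fix c assume c: "c \<in> C"
      have "coeff (cp p c) (M - 2) = (if c = Cpsi M then 1 else 0)"
        by (rule coeff_cp) (use val mx M3 c in auto)
      then show "g c * coeff (cp p c) (M - 2) = (if c = Cpsi M then g c else 0)" by simp
    qed simp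
    also have "\<dots> = g (Cpsi M)" using MC fin by simp
    finally show ?thesis .
  qed
  ultimately show ?thesis by (simp add: g_def)
qed

lemma x_step:
  assumes fin: "finite C" and d: "dep F C"
    and Z: "\<And>q. q \<in> Dom \<Longrightarrow> pd (Cu 0) F q = 0 \<and> pd (Cv 0) F q = 0"
    and DX: "\<And>q. q \<in> Dom \<Longrightarrow> Dxs F q = 0"
    and noj: "\<And>n. Cu (Suc n) \<notin> C \<and> Cv (Suc n) \<notin> C" and nops: "\<And>m. Cpsi m \<notin> C"
    and pD: "p \<in> Dom"
  shows "pd Cx F p = 0"
proof (cases "Cx \<in> C")
  case False thus ?thesis using pd_zero d pD by blast
next
  case True
  have "0 = Dxs F p" using DX pD by simp
  also have "\<dots> = (\<Sum>c\<in>C. coefXs c p * pd c F p)"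
    unfolding Dxs_def by (rule vfield_fin[OF fin d pD])
  also have "\<dots> = (\<Sum>c\<in>C. if c = Cx then pd Cx F p else 0)"
  proof (rule sum.cong)
    fix c assume c: "c \<in> C"
    show "coefXs c p * pd c F p = (if c = Cx then pd Cx F p else 0)"
    proof (cases c)
      case (Cu n) then show ?thesis using noj[of "n - 1"] Z[OF pD] c by (cases n) (auto simp: coefXs_def)
    next
      case (Cv n) then show ?thesis using noj[of "n - 1"] Z[OF pD] c by (cases n) (auto simp: coefXs_def)
    qed (use nops c in \<open>auto simp: coefXs_def\<close>)
  qed simp
  also have "\<dots> = pd Cx F p" using True fin by simp
  finally show ?thesis by simp
qed

lemma y_step:
  assumes fin: "finite C" and d: "dep F C"
    and Z: "\<And>q. q \<in> Dom \<Longrightarrow> pd (Cu 0) F q = 0 \<and> pd (Cv 0) F q = 0"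
    and DY: "\<And>q. q \<in> Dom \<Longrightarrow> Dys F q = 0"
    and noj: "\<And>n. Cu (Suc n) \<notin> C \<and> Cv (Suc n) \<notin> C" and nops: "\<And>m. Cpsi m \<notin> C"
    and pD: "p \<in> Dom"
  shows "pd Cy F p = 0"
proof (cases "Cy \<in> C")
  case False thus ?thesis using pd_zero d pD by blast
next
  case True
  have "0 = Dys F p" using DY pD by simp
  also have "\<dots> = (\<Sum>c\<in>C. coefYs c p * pd c F p)"
    unfolding Dys_def by (rule vfield_fin[OF fin d pD])
  also have "\<dots> = (\<Sum>c\<in>C. if c = Cy then pd Cy F p else 0)"
  proof (rule sum.cong)
    fix c assume c: "c \<in> C"
    show "coefYs c p * pd c F p = (if c = Cy then pd Cy F p else 0)"
    proof (cases c)
      case (Cu n) then show ?thesis using noj[of "n - 1"] Z[OF pD] c by (cases n) (auto simp: coefYs_def)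
    next
      case (Cv n) then show ?thesis using noj[of "n - 1"] Z[OF pD] c by (cases n) (auto simp: coefYs_def)
    qed (use nops c in \<open>auto simp: coefYs_def\<close>)
  qed simp
  also have "\<dots> = pd Cy F p" using True fin by simp
  finally show ?thesis by simp
qed



lemma loop:
  assumes sm: "smooth_fun F"
    and DX: "\<And>q. q \<in> Dom \<Longrightarrow> Dxs F q = 0" and DY: "\<And>q. q \<in> Dom \<Longrightarrow> Dys F q = 0"
  shows "finite C \<Longrightarrow> (\<forall>c\<in>C. valid_coord c) \<Longrightarrow> dep F C \<Longrightarrow> dep F {Cu 0, Cv 0}"
proof (induction "card C" arbitrary: C rule: less_induct)
  case less
  note fin = less.prems(1) and val = less.prems(2) and d = less.prems(3)
  have rem: "dep F {Cu 0, Cv 0}"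
    if c: "c \<in> C" "c \<noteq> Cu 0" "c \<noteq> Cv 0" and z: "\<And>q. q \<in> Dom \<Longrightarrow> pd c F q = 0" for c
  proof -
    have "card (C - {c}) < card C" by (rule card_Diff1_less[OF fin c(1)])
    moreover have "dep F (C - {c})" by (rule reduce[OF sm d c(2,3) z])
    ultimately show ?thesis using less(1)[of "C - {c}"] fin val by auto
  qed
  show ?case
  proof (cases "\<exists>n. Cu (Suc n) \<in> C")
    case True
    define N where "N = Max {n. Cu (Suc n) \<in> C}"
    have finN: "finite {n. Cu (Suc n) \<in> C}"
      using finite_vimageI[OF fin, of "\<lambda>n. Cu (Suc n)"] by (simp add: inj_def vimage_def)
    have N1: "Cu (Suc N) \<in> C" using Max_in[OF finN] True N_def by auto
    have N2: "Cu (Suc (Suc N)) \<notin> C" using Max_ge[OF finN, of "Suc N"] N_def by auto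
    show ?thesis by (rule rem[OF N1]) (auto intro: jet_u[OF fin d N2 DX])
  next
    case nu: False
    show ?thesis
    proof (cases "\<exists>n. Cv (Suc n) \<in> C")
      case True
      define N where "N = Max {n. Cv (Suc n) \<in> C}"
      have finN: "finite {n. Cv (Suc n) \<in> C}"
        using finite_vimageI[OF fin, of "\<lambda>n. Cv (Suc n)"] by (simp add: inj_def vimage_def)
      have N1: "Cv (Suc N) \<in> C" using Max_in[OF finN] True N_def by auto
      have N2: "Cv (Suc (Suc N)) \<notin> C" using Max_ge[OF finN, of "Suc N"] N_def by auto
      show ?thesis by (rule rem[OF N1]) (auto intro: jet_v[OF fin d N2 DX])
    next
      case nv: False
      have Z: "pd (Cu 0) F q = 0 \<and> pd (Cv 0) F q = 0" if "q \<in> Dom" for q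
      proof
        show "pd (Cu 0) F q = 0" by (rule jet_u[OF fin d _ DX that]) (use nu in auto)
        show "pd (Cv 0) F q = 0" by (rule jet_v[OF fin d _ DX that]) (use nv in auto)
      qed
      have noj: "\<And>n. Cu (Suc n) \<notin> C \<and> Cv (Suc n) \<notin> C" using nu nv by blast
      show ?thesis
      proof (cases "\<exists>m. Cpsi m \<in> C")
        case True
        define M where "M = Max {m. Cpsi m \<in> C}"
        have finM: "finite {m. Cpsi m \<in> C}"
          using finite_vimageI[OF fin, of "Cpsi"] by (simp add: inj_def vimage_def)
        have M1: "Cpsi M \<in> C" using Max_in[OF finM] True M_def by auto
        have mx: "\<And>m. Cpsi m \<in> C \<Longrightarrow> m \<le> M" using Max_ge[OF finM] M_def by auto
        show ?thesis by (rule rem[OF M1]) (auto intro: psi_step[OF sm fin val d Z DX M1 mx])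
      next
        case np: False
        have nops: "\<And>m. Cpsi m \<notin> C" using np by blast
        show ?thesis
        proof (cases "Cx \<in> C")
          case True
          show ?thesis by (rule rem[OF True]) (auto intro: x_step[OF fin d Z DX noj nops])
        next
          case nx: False
          show ?thesis
          proof (cases "Cy \<in> C")
            case True
            show ?thesis by (rule rem[OF True]) (auto intro: y_step[OF fin d Z DY noj nops])
          next
            case ny: False
            have "C \<subseteq> {Cu 0, Cv 0}"
            proof
              fix c assume c: "c \<in> C"
              show "c \<in> {Cu 0, Cv 0}"
              proof (cases c)
                case (Cu n) thus ?thesis using noj[of "n - 1"] c by (cases n) auto
              next
                case (Cv n) thus ?thesis using noj[of "n - 1"] c by (cases n) auto
              qed (use nops nx ny c in auto)
            qed
            then show ?thesis using dep_mono d by blast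
          qed
        qed
      qed
    qed
  qed
qed

lemma const_halves:
  assumes sm: "smooth_fun F"
    and DX: "\<And>q. q \<in> Dom \<Longrightarrow> Dxs F q = 0" and DY: "\<And>q. q \<in> Dom \<Longrightarrow> Dys F q = 0"
    and H: "H \<in> {{p\<in>Dom. p (Cu 0) < p (Cv 0)}, {p\<in>Dom. p (Cv 0) < p (Cu 0)}}"
  shows "\<exists>c. \<forall>p\<in>H. F p = c"
proof -
  obtain C where C: "finite C" "\<forall>c\<in>C. valid_coord c" "dep F C"
    using sm unfolding smooth_fun_def depends_fin_def dep_def by blast
  have d: "dep F {Cu 0, Cv 0}" by (rule loop[OF sm DX DY C])
  have Z: "pd (Cu 0) F q = 0 \<and> pd (Cv 0) F q = 0" if "q \<in> Dom" for q
  proof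
    show "pd (Cu 0) F q = 0" by (rule jet_u[OF _ d _ DX that]) auto
    show "pd (Cv 0) F q = 0" by (rule jet_v[OF _ d _ DX that]) auto
  qed
  have "H = {p\<in>Dom. p (Cu 0) < p (Cv 0)} \<or> H = {p\<in>Dom. p (Cv 0) < p (Cu 0)}" using H by auto
  then show ?thesis
  proof (elim disjE)
    assume H1: "H = {p\<in>Dom. p (Cu 0) < p (Cv 0)}"
    define p0 :: pt where "p0 = (\<lambda>_. 0)(Cv 0 := 1)"
    have "F p = F p0" if "p \<in> H" for p
    proof -
      have "F p = F (p(Cu 0 := 0, Cv 0 := 1))" using half_inv1[OF sm Z, of p 0 1] that H1 by auto
      also have "\<dots> = F p0" by (rule depD[OF d]) (auto simp: Dom_def p0_def)
      finally show ?thesis .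
    qed
    then show ?thesis by blast
  next
    assume H2: "H = {p\<in>Dom. p (Cv 0) < p (Cu 0)}"
    define p0 :: pt where "p0 = (\<lambda>_. 0)(Cu 0 := 1)"
    have "F p = F p0" if "p \<in> H" for p
    proof -
      have "F p = F (p(Cu 0 := 1, Cv 0 := 0))" using half_inv2[OF sm Z, of p 0 1] that H2 by auto
      also have "\<dots> = F p0" by (rule depD[OF d]) (auto simp: Dom_def p0_def)
      finally show ?thesis .
    qed
    then show ?thesis by blast
  qed
qed

lemma pd_coord: "pd c (\<lambda>p. p d) = (\<lambda>p. if c = d then 1 else 0)"
proof
  fix p :: pt
  show "pd c (\<lambda>p. p d) p = (if c = d then 1 else 0)"
  proof (cases "c = d")
    case True
    then have "(\<lambda>t. (p(c:=t)) d) = (\<lambda>t. t)" by auto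
    then show ?thesis using True by (simp add: pd_def)
  next
    case False
    then have "(\<lambda>t. (p(c:=t)) d) = (\<lambda>t. p d)" by auto
    then show ?thesis using False by (simp add: pd_def)
  qed
qed

lemma pd_const: "pd c (\<lambda>p. K) = (\<lambda>p. 0)"
  by (simp add: pd_def fun_eq_iff)

lemma iter_pd_coord: "iter_pd cs (\<lambda>p. p d) \<in> {(\<lambda>p. p d), (\<lambda>p. 1), (\<lambda>p. 0)}"
proof (induction cs)
  case Nil then show ?case by (simp add: iter_pd_def)
next
  case (Cons c cs)
  have e: "iter_pd (c # cs) (\<lambda>p. p d) = pd c (iter_pd cs (\<lambda>p. p d))" by (simp add: iter_pd_def)
  from Cons show ?case unfolding e by (auto simp: pd_coord pd_const)
qed

lemma depends_coord: "valid_coord d \<Longrightarrow> depends_fin (\<lambda>p. p d)"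
  unfolding depends_fin_def
proof (rule exI[of _ "{d}"], intro conjI)
  show "\<forall>p\<in>Dom. \<forall>q\<in>Dom. (\<forall>c\<in>{d}. p c = q c) \<longrightarrow> p d = q d" by blast
qed auto

lemma smooth_coord:
  assumes "valid_coord d" shows "smooth_fun (\<lambda>p. p d)"
proof -
  have cont: "continuous_on Dom (\<lambda>p::pt. p d)"
    by (rule continuous_on_subset[OF continuous_on_product_coordinates]) simp
  have dif: "(\<lambda>t. (p(c:=t)) d) differentiable (at (p c))" for p :: pt and c
    by (cases "c = d") auto
  have A: "continuous_on Dom (iter_pd cs (\<lambda>p. p d))" for cs
    using iter_pd_coord[of cs d] cont by auto
  have B: "\<forall>c. \<forall>p\<in>Dom. (\<lambda>t. iter_pd cs (\<lambda>p. p d) (p(c := t))) differentiable at (p c)" for cs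
    using iter_pd_coord[of cs d] dif by auto
  show ?thesis unfolding smooth_fun_def using depends_coord[OF assms] A B by simp
qed

lemma vfield_coord: "vfield coef (\<lambda>p. p d) p = coef d p"
proof -
  have "vfield coef (\<lambda>p. p d) p = infsum (\<lambda>c. coef c p) {d}"
    unfolding vfield_def pd_coord by (rule infsum_cong_neutral) auto
  then show ?thesis by simp
qed

lemma Xk_upd_psi: "a < b + 3 \<Longrightarrow> Xk a (p(Cpsi b := t)) = Xk a p"
  unfolding Xk_def sigma_def
  by (intro arg_cong2[where f = minus] refl sum.cong) (auto simp: psi_def)

lemma Yk_upd_psi: "a < b + 2 \<Longrightarrow> 3 \<le> b \<Longrightarrow> Yk a (p(Cpsi b := t)) = Yk a p"
  unfolding Yk_def using Xk_upd_psi[of "a - 1" b p t] by (auto simp: psi_def)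

lemma sym_consequences:
  assumes k3: "3 \<le> k" and sym: "is_symmetry (invis_field k Psi)"
    and a: "k \<le> a" "a \<le> Suc k" and pD: "p \<in> Dom"
  shows "Dxs (Psi a) p = 0 \<and> Dys (Psi a) p = 0"
proof -
  define f where "f = (\<lambda>p::pt. p (Cpsi a))"
  have a3: "3 \<le> a" using k3 a by simp
  have smf: "smooth_fun f" unfolding f_def by (rule smooth_coord) (use a3 in \<open>simp add: valid_coord_def\<close>)
  define S where "S = invis_field k Psi"
  have Sf: "S f = Psi a" unfolding S_def invis_field_def f_def
    by (rule ext, subst vfield_coord) (use a in simp)
  have Xf: "Dxs f = Xk a" unfolding Dxs_def f_def
    by (rule ext, subst vfield_coord) (use a3 in \<open>simp add: coefXs_def\<close>)
  have Yf: "Dys f = Yk a" unfolding Dys_def f_def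
    by (rule ext, subst vfield_coord) (use a3 in \<open>simp add: coefYs_def\<close>)
  have SX: "S (Xk a) p = 0"
    unfolding S_def invis_field_def vfield_def
  proof (rule infsum_0)
    fix c
    show "(case c of Cpsi b \<Rightarrow> if k \<le> b then Psi b p else 0 | _ \<Rightarrow> 0) * pd c (Xk a) p = 0"
    proof (cases c)
      case (Cpsi b)
      show ?thesis
      proof (cases "k \<le> b")
        case True
        then have "(\<lambda>t. Xk a (p(Cpsi b := t))) = (\<lambda>t. Xk a p)" using a Xk_upd_psi by auto
        then have "pd c (Xk a) p = 0" using Cpsi by (simp add: pd_def)
        then show ?thesis by simp
      qed (use Cpsi in simp)
    qed simp_all
  qed
  have SY: "S (Yk a) p = 0"
    unfolding S_def invis_field_def vfield_def
  proof (rule infsum_0)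
    fix c
    show "(case c of Cpsi b \<Rightarrow> if k \<le> b then Psi b p else 0 | _ \<Rightarrow> 0) * pd c (Yk a) p = 0"
    proof (cases c)
      case (Cpsi b)
      show ?thesis
      proof (cases "k \<le> b")
        case True
        then have "(\<lambda>t. Yk a (p(Cpsi b := t))) = (\<lambda>t. Yk a p)" using a k3 Yk_upd_psi by auto
        then have "pd c (Yk a) p = 0" using Cpsi by (simp add: pd_def)
        then show ?thesis by simp
      qed (use Cpsi in simp)
    qed simp_all
  qed
  have "S (Dxs f) p = Dxs (S f) p \<and> S (Dys f) p = Dys (S f) p"
    using sym smf pD unfolding is_symmetry_def S_def by blast
  then show ?thesis using SX SY Sf Xf Yf by simp
qed


theorem mainTheorem4:
  fixes k :: nat and Psi :: "nat \<Rightarrow> pt \<Rightarrow> real"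
  assumes "3 \<le> k"
    and "\<And>a. k \<le> a \<Longrightarrow> smooth_fun (Psi a)"
    and "is_symmetry (invis_field k Psi)"
  shows "(\<forall>a\<in>{k, Suc k}. \<forall>H\<in>{{p\<in>Dom. p (Cu 0) < p (Cv 0)}, {p\<in>Dom. p (Cv 0) < p (Cu 0)}}.
            \<exists>c. \<forall>p\<in>H. Psi a p = c)
       \<and> (\<forall>H\<in>{{p\<in>Dom. p (Cu 0) < p (Cv 0)}, {p\<in>Dom. p (Cv 0) < p (Cu 0)}}.
            (\<exists>p\<in>H. Psi k p \<noteq> 0) \<longrightarrow>
            (\<exists>c \<gamma>. c \<noteq> 0 \<and> (\<forall>p\<in>H. c * Psi k p = 1 \<and> c * Psi (Suc k) p = \<gamma>)))"
proof -
  have DD: "Dxs (Psi a) p = 0 \<and> Dys (Psi a) p = 0" if "a \<in> {k, Suc k}" "p \<in> Dom" for a p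
    using sym_consequences[OF assms(1) assms(3), of a p] that by auto
  have C: "\<exists>c. \<forall>p\<in>H. Psi a p = c"
    if a: "a \<in> {k, Suc k}" and H: "H \<in> {{p\<in>Dom. p (Cu 0) < p (Cv 0)}, {p\<in>Dom. p (Cv 0) < p (Cu 0)}}" for a H
  proof -
    have sm: "smooth_fun (Psi a)" using assms(2) a by auto
    show ?thesis by (rule const_halves[OF sm _ _ H]) (use DD[OF a] in auto)
  qed
  have P2: "\<exists>c \<gamma>. c \<noteq> 0 \<and> (\<forall>p\<in>H. c * Psi k p = 1 \<and> c * Psi (Suc k) p = \<gamma>)"
    if H: "H \<in> {{p\<in>Dom. p (Cu 0) < p (Cv 0)}, {p\<in>Dom. p (Cv 0) < p (Cu 0)}}"
      and ex: "\<exists>p\<in>H. Psi k p \<noteq> 0" for H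
  proof -
    obtain c1 where c1: "\<forall>p\<in>H. Psi k p = c1" using C[of k H] H by auto
    obtain c2 where c2: "\<forall>p\<in>H. Psi (Suc k) p = c2" using C[of "Suc k" H] H by auto
    have nz: "c1 \<noteq> 0" using ex c1 by auto
    show ?thesis
      by (rule exI[of _ "1 / c1"], rule exI[of _ "c2 / c1"]) (use c1 c2 nz in auto)
  qed
  show ?thesis
  proof (rule conjI)
    show "\<forall>a\<in>{k, Suc k}. \<forall>H\<in>{{p\<in>Dom. p (Cu 0) < p (Cv 0)}, {p\<in>Dom. p (Cv 0) < p (Cu 0)}}.
            \<exists>c. \<forall>p\<in>H. Psi a p = c"
    proof (rule ballI, rule ballI)
      fix a H
      assume "a \<in> {k, Suc k}" "H \<in> {{p\<in>Dom. p (Cu 0) < p (Cv 0)}, {p\<in>Dom. p (Cv 0) < p (Cu 0)}}"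
      then show "\<exists>c. \<forall>p\<in>H. Psi a p = c" by (rule C)
    qed
    show "\<forall>H\<in>{{p\<in>Dom. p (Cu 0) < p (Cv 0)}, {p\<in>Dom. p (Cv 0) < p (Cu 0)}}.
            (\<exists>p\<in>H. Psi k p \<noteq> 0) \<longrightarrow>
            (\<exists>c \<gamma>. c \<noteq> 0 \<and> (\<forall>p\<in>H. c * Psi k p = 1 \<and> c * Psi (Suc k) p = \<gamma>))"
    proof (rule ballI, rule impI)
      fix H
      assume "H \<in> {{p\<in>Dom. p (Cu 0) < p (Cv 0)}, {p\<in>Dom. p (Cv 0) < p (Cu 0)}}" "\<exists>p\<in>H. Psi k p \<noteq> 0"
      then show "\<exists>c \<gamma>. c \<noteq> 0 \<and> (\<forall>p\<in>H. c * Psi k p = 1 \<and> c * Psi (Suc k) p = \<gamma>)" by (rule P2)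
    qed
  qed
qed

end
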